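(* There is no probability rule for discrete many-worlds theory satisfying Axioms (A1)–(A3).
   Context: Discrete many-worlds theory is defined as follows. The worlds are the vectors $\lvert n\rangle$, $n\in\{0,1,2,\dots\}$, of a countably infinite basis. The allowed states are the real vectors $v=\sum_n v_n\lvert n\rangle$ in which every $v_n$ is a nonnegative integer and $\sum_n v_n<\infty$; here $v_n$ is the amplitude of world $n$. The allowed transformations are the linear maps $T$ in which every matrix element $T_{ij}$ is a nonnegative integer and $\sum_i T_{ij}<\infty$ for every $j$, acting by $(Tv)_i=\sum_j T_{ij}v_j$. A probability rule assigns to each allowed state $v$ a sequence $(p_n(v))_{n\ge 0}$ of nonnegative reals with $\sum_n p_n(v)=1$. The axioms are: (A1) Present state dependence: $p_n$ depends only on the present state $v$, so $p$ is a function of the state alone. (A2) Weak connection with amplitudes: for every allowed state $v$, $v_n=0$ implies $p_n(v)=0$. (A3) Weak connection with transformations: for every allowed state $v$ and allowed transformation $T$, and every partition of $\{0,1,2,\dots\}$ into subsets $\mathcal S_k$ such that $T_{ij}=0$ whenever $i$ and $j$ lie in different subsets, we have $\sum_{n\in\mathcal S_k}p_n(v)=\sum_{n\in\mathcal S_k}p_n(Tv)$ for every $k$. *)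

theory Defs
  imports "HOL-Analysis.Analysis"
begin

text \<open>Allowed states: amplitude vectors with nonnegative integer entries and finite
  total amplitude, i.e. finitely supported functions nat => nat.\<close>
definition allowed_state :: "(nat \<Rightarrow> nat) \<Rightarrow> bool" where
  "allowed_state v \<longleftrightarrow> finite {n. v n \<noteq> 0}"

text \<open>Allowed transformations: matrices T i j of nonnegative integers with every
  column sum finite, i.e. finitely many nonzero entries in every column.\<close>
definition allowed_trans :: "(nat \<Rightarrow> nat \<Rightarrow> nat) \<Rightarrow> bool" where
  "allowed_trans T \<longleftrightarrow> (\<forall>j. finite {i. T i j \<noteq> 0})"

definition apply_trans :: "(nat \<Rightarrow> nat \<Rightarrow> nat) \<Rightarrow> (nat \<Rightarrow> nat) \<Rightarrow> nat \<Rightarrow> nat" where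
  "apply_trans T v = (\<lambda>i. \<Sum>j\<in>{j. v j \<noteq> 0}. T i j * v j)"

text \<open>A probability rule (A1 is built in: p is a function of the present state only),
  assigning to each (nonzero) allowed state a probability sequence.\<close>
definition prob_rule :: "((nat \<Rightarrow> nat) \<Rightarrow> nat \<Rightarrow> real) \<Rightarrow> bool" where
  "prob_rule p \<longleftrightarrow>
     (\<forall>v. allowed_state v \<and> v \<noteq> (\<lambda>_. 0) \<longrightarrow> (\<forall>n. p v n \<ge> 0) \<and> (p v) sums 1)"

definition axiom_A2 :: "((nat \<Rightarrow> nat) \<Rightarrow> nat \<Rightarrow> real) \<Rightarrow> bool" where
  "axiom_A2 p \<longleftrightarrow>
     (\<forall>v n. allowed_state v \<and> v \<noteq> (\<lambda>_. 0) \<and> v n = 0 \<longrightarrow> p v n = 0)"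

text \<open>(A3) weak connection with transformations. A partition of nat into subsets
  S_k is given by a block-label function c (S_k = {n. c n = k}).\<close>
definition axiom_A3 :: "((nat \<Rightarrow> nat) \<Rightarrow> nat \<Rightarrow> real) \<Rightarrow> bool" where
  "axiom_A3 p \<longleftrightarrow>
     (\<forall>v T (c :: nat \<Rightarrow> nat).
        allowed_state v \<and> v \<noteq> (\<lambda>_. 0) \<and> allowed_trans T \<and> apply_trans T v \<noteq> (\<lambda>_. 0) \<and>
        (\<forall>i j. c i \<noteq> c j \<longrightarrow> T i j = 0) \<longrightarrow>
        (\<forall>k. infsum (p v) {n. c n = k} = infsum (p (apply_trans T v)) {n. c n = k}))"

end

theory Submission
  imports Defs
begin

lemma key:
  assumes A2: "axiom_A2 p" and A3: "axiom_A3 p" and a: "a \<le> (1::nat)"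
  shows "p (\<lambda>n. if n \<le> 1 then 1 else 0) a = 0"
proof -
  define v :: "nat \<Rightarrow> nat" where "v = (\<lambda>n. if n \<le> 1 then 1 else 0)"
  define T :: "nat \<Rightarrow> nat \<Rightarrow> nat" where "T = (\<lambda>i j. if i = j \<and> i \<noteq> a then 1 else 0)"
  have sv: "{n. v n \<noteq> 0} = {0,1}" by (auto simp: v_def)
  have av: "allowed_state v" unfolding allowed_state_def sv by simp
  have v0: "v \<noteq> (\<lambda>_. 0)" by (metis v_def le0 one_neq_zero)
  have aT: "allowed_trans T" unfolding allowed_trans_def
  proof
    fix j show "finite {i. T i j \<noteq> 0}"
      by (rule finite_subset[of _ "{j}"]) (auto simp: T_def)
  qed
  have Tv: "apply_trans T v = (\<lambda>i. if i \<le> 1 \<and> i \<noteq> a then 1 else 0)"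
    unfolding apply_trans_def sv using a by (auto simp: T_def v_def fun_eq_iff)
  have Tv0: "apply_trans T v \<noteq> (\<lambda>_. 0)"
  proof
    assume "apply_trans T v = (\<lambda>_. 0)"
    hence "apply_trans T v (1 - a) = 0" by simp
    thus False using a unfolding Tv by (cases a) auto
  qed
  have aTv: "allowed_state (apply_trans T v)"
    unfolding allowed_state_def Tv by (rule finite_subset[of _ "{0,1}"]) auto
  have c: "\<forall>i j. id i \<noteq> id j \<longrightarrow> T i j = 0" by (simp add: T_def)
  have "infsum (p v) {n. id n = a} = infsum (p (apply_trans T v)) {n. id n = a}"
    using A3 av v0 aT Tv0 c unfolding axiom_A3_def by blast
  hence "p v a = p (apply_trans T v) a" by simp
  also have "\<dots> = 0" using A2 aTv Tv0 unfolding axiom_A2_def by (simp add: Tv)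
  finally show ?thesis by (simp add: v_def)
qed

theorem theorem5:
  shows "\<not> (\<exists>p. prob_rule p \<and> axiom_A2 p \<and> axiom_A3 p)"
proof
  assume "\<exists>p. prob_rule p \<and> axiom_A2 p \<and> axiom_A3 p"
  then obtain p where P: "prob_rule p" "axiom_A2 p" "axiom_A3 p" by blast
  define v :: "nat \<Rightarrow> nat" where "v = (\<lambda>n. if n \<le> 1 then 1 else 0)"
  have sv: "{n. v n \<noteq> 0} = {0,1}" by (auto simp: v_def)
  have av: "allowed_state v" unfolding allowed_state_def sv by simp
  have v0: "v \<noteq> (\<lambda>_. 0)" by (metis v_def le0 one_neq_zero)
  have z: "p v n = 0" for n
  proof (cases "n \<le> 1")
    case True thus ?thesis using key[OF P(2,3) True] by (simp add: v_def)
  next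
    case False thus ?thesis using P(2) av v0 unfolding axiom_A2_def by (auto simp: v_def)
  qed
  have "p v sums 1" using P(1) av v0 unfolding prob_rule_def by blast
  hence "(\<lambda>_. 0::real) sums 1" proof -
    have "p v = (\<lambda>_. 0)" using z by (simp add: fun_eq_iff)
    thus ?thesis using \<open>p v sums 1\<close> by simp
  qed
  thus False using sums_unique2 sums_zero by fastforce
qed

end
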